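(* Fix $\alpha>1$, a Pufferfish scenario $(\mathcal S,\mathcal Q,\Theta)$ and a slice profile $(\mathcal U,\omega)$. If a mechanism $\mathcal M$ satisfies $(\alpha,\epsilon,\omega)$-Ave-SRPP in $(\mathcal S,\mathcal Q,\Theta)$, then for any $\delta\in(0,1)$ it satisfies $(\epsilon',\delta,\omega)$-Ave-SPP in $(\mathcal S,\mathcal Q,\Theta)$ with $\epsilon'=\epsilon+\frac{\log(1/\delta)}{\alpha-1}$.
   Context: Pufferfish scenario: secrets $\mathcal S$, pairs $\mathcal Q\subseteq\mathcal S\times\mathcal S$, priors $\Theta$, each a joint law of secret $S$ and dataset $X$ with secret marginal $P^S_\theta$; $\mathcal M^\theta_s$ is the law of $\mathcal M(X)\in\mathbb R^d$ given $S=s$ under $\theta$. Slice profile: $\mathcal U\subseteq\mathbb S^{d-1}$, $\omega$ a probability measure on the unit sphere supported on $\mathcal U$; $\Psi^u(a)=\langle a,u\rangle$, $\Psi^u_\#$ pushforward. $\mathtt D_\alpha$ is R\'enyi divergence. $\mathcal M$ is $(\alpha,\epsilon,\omega)$-Ave-SRPP if $\int\mathtt D_\alpha(\Psi^u_\#\mathcal M^\theta_{s_i}\|\Psi^u_\#\mathcal M^\theta_{s_j})\,d\omega(u)\le\epsilon$ for all $\theta\in\Theta$ and $(s_i,s_j)\in\mathcal Q$ with $P^S_\theta(s_i),P^S_\theta(s_j)>0$. Approximate max-divergence: $\mathtt D^\delta_\infty(P\|Q)=\inf\{\varepsilon\ge0:\ P(A)\le e^\varepsilon Q(A)+\delta\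 \text{for all measurable }A\}$. $\mathcal M$ is $(\varepsilon,\delta,\omega)$-Ave-SPP if $\int\mathtt D^\delta_\infty(\Psi^u_\#\mathcal M^\theta_{s_i}\|\Psi^u_\#\mathcal M^\theta_{s_j})\,d\omega(u)\le\varepsilon$ for all such $\theta$ and $(s_i,s_j)$. *)

theory Defs
  imports "HOL-Probability.Probability"
begin

definition renyi_div :: "real \<Rightarrow> 'b measure \<Rightarrow> 'b measure \<Rightarrow> ereal" where
  "renyi_div \<alpha> P Q =
     (if absolutely_continuous Q P then
        (let I = (\<integral>\<^sup>+ x. ennreal (enn2real (RN_deriv Q P x) powr \<alpha>) \<partial>Q)
         in if I = \<infinity> then \<infinity> else ereal (ln (enn2real I) / (\<alpha> - 1)))
      else \<infinity>)"

text \<open>Approximate max-divergence; the infimum of the empty set is infinity.\<close>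
definition approx_max_div :: "real \<Rightarrow> 'b measure \<Rightarrow> 'b measure \<Rightarrow> ereal" where
  "approx_max_div \<delta> P Q =
     Inf {ereal \<epsilon> | \<epsilon>. \<epsilon> \<ge> 0 \<and>
            (\<forall>A \<in> sets P. measure P A \<le> exp \<epsilon> * measure Q A + \<delta>)}"

definition slice_push :: "'a::euclidean_space \<Rightarrow> 'a measure \<Rightarrow> real measure" where
  "slice_push u N = distr N borel (\<lambda>a. a \<bullet> u)"

text \<open>A prior theta is a joint law of (secret, dataset) on 's \<times> 'x. Secret marginal:\<close>
definition secret_marg :: "('s \<times> 'x) measure \<Rightarrow> 's \<Rightarrow> real" where
  "secret_marg \<theta> s = measure \<theta> {p \<in> space \<theta>. fst p = s}"

text \<open>Law of the mechanism output M(X) given S = s under theta (M is a Markov kernel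
  from datasets to output distributions).\<close>
definition cond_out :: "('s \<times> 'x) measure \<Rightarrow> ('x \<Rightarrow> 'a measure) \<Rightarrow> 's \<Rightarrow> 'a measure" where
  "cond_out \<theta> M s = uniform_measure \<theta> {p \<in> space \<theta>. fst p = s} \<bind> (\<lambda>p. M (snd p))"

definition ave_SRPP ::
  "real \<Rightarrow> real \<Rightarrow> 'a::euclidean_space measure \<Rightarrow> ('s \<times> 's) set \<Rightarrow> ('s \<times> 'x) measure set
     \<Rightarrow> ('x \<Rightarrow> 'a measure) \<Rightarrow> bool" where
  "ave_SRPP \<alpha> \<epsilon> \<omega> Q \<Theta> M \<longleftrightarrow>
     (\<forall>\<theta> \<in> \<Theta>. \<forall>(si, sj) \<in> Q. secret_marg \<theta> si > 0 \<longrightarrow> secret_marg \<theta> sj > 0 \<longrightarrow>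
        enn2ereal (\<integral>\<^sup>+ u. e2ennreal (renyi_div \<alpha> (slice_push u (cond_out \<theta> M si))
                                             (slice_push u (cond_out \<theta> M sj))) \<partial>\<omega>)
          \<le> ereal \<epsilon>)"

definition ave_SPP ::
  "real \<Rightarrow> real \<Rightarrow> 'a::euclidean_space measure \<Rightarrow> ('s \<times> 's) set \<Rightarrow> ('s \<times> 'x) measure set
     \<Rightarrow> ('x \<Rightarrow> 'a measure) \<Rightarrow> bool" where
  "ave_SPP \<epsilon> \<delta> \<omega> Q \<Theta> M \<longleftrightarrow>
     (\<forall>\<theta> \<in> \<Theta>. \<forall>(si, sj) \<in> Q. secret_marg \<theta> si > 0 \<longrightarrow> secret_marg \<theta> sj > 0 \<longrightarrow>
        enn2ereal (\<integral>\<^sup>+ u. e2ennreal (approx_max_div \<delta> (slice_push u (cond_out \<theta> M si))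
                                             (slice_push u (cond_out \<theta> M sj))) \<partial>\<omega>)
          \<le> ereal \<epsilon>)"

end

theory Submission imports Defs begin

lemma nn_integral_add_const_le:
  assumes "prob_space M"
  shows "(\<integral>\<^sup>+x. f x + c \<partial>M) \<le> (\<integral>\<^sup>+x. f x \<partial>M) + c"
proof (cases "c = top")
  case True
  then show ?thesis by simp
next
  case ctop: False
  have "integral\<^sup>S M g \<le> (\<integral>\<^sup>+x. f x \<partial>M) + c"
    if g: "simple_function M g" "g \<le> (\<lambda>x. f x + c)" for g
  proof -
    let ?g' = "\<lambda>x. g x - c"
    have sg': "simple_function M ?g'"
      using simple_function_compose[OF g(1), of "\<lambda>y. y - c"] by (simp add: o_def)
    have le: "?g' x \<le> f x" for x
    proof -
      have "g x \<le> f x + c" using g(2) by (simp add: le_fun_def)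
      then show ?thesis using ctop by (simp add: add.commute ennreal_minus_le_iff)
    qed
    have "integral\<^sup>S M g = (\<integral>\<^sup>+x. g x \<partial>M)"
      by (simp add: nn_integral_eq_simple_integral g(1))
    also have "\<dots> \<le> (\<integral>\<^sup>+x. ?g' x + c \<partial>M)"
      by (intro nn_integral_mono) (use diff_add_self_ennreal in auto)
    also have "\<dots> = (\<integral>\<^sup>+x. ?g' x \<partial>M) + c"
      using sg' assms
      by (subst nn_integral_add) (auto intro: borel_measurable_simple_function simp: prob_space.emeasure_space_1)
    also have "\<dots> \<le> (\<integral>\<^sup>+x. f x \<partial>M) + c"
      by (intro add_right_mono nn_integral_mono le)
    finally show ?thesis .
  qed
  then show ?thesis
    unfolding nn_integral_def[of M "\<lambda>x. f x + c"] by (auto intro!: SUP_least)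
qed

lemma pointwise_bound:
  fixes \<rho> K \<alpha> :: real
  assumes "0 \<le> \<rho>" "0 < K" "\<alpha> > 1" "i = 0 \<or> i = 1"
  shows "\<rho> * i \<le> K * i + K powr (1 - \<alpha>) * \<rho> powr \<alpha>"
proof (cases "\<rho> \<le> K")
  case True
  have h: "0 \<le> K powr (1 - \<alpha>) * \<rho> powr \<alpha>" by simp
  from assms(4) show ?thesis
  proof
    assume "i = 0" then show ?thesis using h by simp
  next
    assume "i = 1" then show ?thesis using add_increasing2[OF h True] by simp
  qed
next
  case False
  then have rp: "\<rho> > 0" using assms by simp
  have "\<rho> = \<rho> powr \<alpha> * \<rho> powr (1 - \<alpha>)"
    using rp by (simp add: powr_add[symmetric])
  also have "\<dots> \<le> \<rho> powr \<alpha> * K powr (1 - \<alpha>)"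
    using False assms by (intro mult_left_mono powr_mono2') auto
  finally have "\<rho> \<le> K powr (1 - \<alpha>) * \<rho> powr \<alpha>" by (simp add: mult.commute)
  then show ?thesis using assms(2,4) by auto
qed

lemma key:
  fixes P Q :: "'b measure"
  assumes PP: "prob_space P" and PQ: "prob_space Q" and sPQ: "sets P = sets Q"
    and a: "\<alpha> > 1" and d: "0 < \<delta>" "\<delta> \<le> 1"
  shows "e2ennreal (approx_max_div \<delta> P Q)
           \<le> e2ennreal (renyi_div \<alpha> P Q) + ennreal (ln (1 / \<delta>) / (\<alpha> - 1))"
proof -
  define I where "I = (\<integral>\<^sup>+ x. ennreal (enn2real (RN_deriv Q P x) powr \<alpha>) \<partial>Q)"
  show ?thesis
  proof (cases "absolutely_continuous Q P \<and> I \<noteq> \<infinity>")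
    case False
    then have "renyi_div \<alpha> P Q = \<infinity>" unfolding renyi_div_def I_def[symmetric] by (auto simp: Let_def)
    then show ?thesis by simp
  next
    case True
    then have ac: "absolutely_continuous Q P" and Ifin: "I \<noteq> \<infinity>" by auto
    define Ir where "Ir = enn2real I"
    define D where "D = ln Ir / (\<alpha> - 1)"
    define c where "c = ln (1 / \<delta>) / (\<alpha> - 1)"
    define K where "K = exp (D + c)"
    define \<epsilon> where "\<epsilon> = max 0 D + c"
    have ren: "renyi_div \<alpha> P Q = ereal D"
      using True unfolding renyi_div_def I_def[symmetric] D_def Ir_def by (auto simp: Let_def)
    have c0: "c \<ge> 0" unfolding c_def using a d by (auto intro!: divide_nonneg_pos)
    have eps0: "\<epsilon> \<ge> 0" unfolding \<epsilon>_def using c0 by simp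
    have Ir0: "Ir \<ge> 0" unfolding Ir_def by simp
    have II: "I = ennreal Ir" unfolding Ir_def using Ifin by (simp add: ennreal_enn2real less_top[symmetric])
    have Kpos: "K > 0" unfolding K_def by simp
    have Kd: "K powr (1 - \<alpha>) * Ir \<le> \<delta>"
    proof (cases "Ir = 0")
      case True then show ?thesis using d by simp
    next
      case False
      then have Irp: "Ir > 0" using Ir0 by simp
      have "K powr (1 - \<alpha>) = exp ((1 - \<alpha>) * (D + c))"
        unfolding K_def powr_def by simp
      also have "(1 - \<alpha>) * (D + c) = - (ln Ir + ln (1 / \<delta>))"
      proof -
        have ne: "\<alpha> - 1 \<noteq> 0" using a by simp
        have e1: "(\<alpha> - 1) * D = ln Ir" using ne by (simp add: D_def)
        have e2: "(\<alpha> - 1) * c = ln (1 / \<delta>)" using ne by (simp add: c_def)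
        have "(1 - \<alpha>) * (D + c) = - ((\<alpha> - 1) * D) - (\<alpha> - 1) * c" by (simp add: algebra_simps)
        then show ?thesis using e1 e2 by simp
      qed
      also have "exp (- (ln Ir + ln (1 / \<delta>))) = inverse (Ir * (1 / \<delta>))"
        using Irp d by (subst exp_minus, subst exp_add) simp
      finally show ?thesis using Irp by simp
    qed
    have KE: "K \<le> exp \<epsilon>" unfolding K_def \<epsilon>_def by simp
    interpret Q: prob_space Q by (rule PQ)
    interpret P: prob_space P by (rule PP)
    have bnd: "measure P A \<le> exp \<epsilon> * measure Q A + \<delta>" if A: "A \<in> sets P" for A
    proof -
      let ?r = "RN_deriv Q P"
      have AQ: "A \<in> sets Q" using A sPQ by simp
      have dens: "density Q ?r = P" using Q.density_RN_deriv[OF ac sPQ] .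
      have fin: "AE x in Q. ?r x \<noteq> \<infinity>"
        using Q.RN_deriv_finite[OF _ ac sPQ] P.sigma_finite_measure_axioms by simp
      have "emeasure P A = emeasure (density Q ?r) A" using dens by simp
      also have "\<dots> = (\<integral>\<^sup>+x. ?r x * indicator A x \<partial>Q)"
        using AQ by (simp add: emeasure_density)
      also have "\<dots> = (\<integral>\<^sup>+x. ennreal (enn2real (?r x) * indicator A x) \<partial>Q)"
        apply (rule nn_integral_cong_AE)
        using fin by eventually_elim (auto simp: ennreal_mult' ennreal_enn2real_if indicator_def)
      also have "\<dots> \<le> (\<integral>\<^sup>+x. ennreal K * indicator A x
                      + ennreal (K powr (1 - \<alpha>)) * ennreal (enn2real (?r x) powr \<alpha>) \<partial>Q)"
      proof (intro nn_integral_mono)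
        fix x
        have "enn2real (?r x) * indicator A x \<le> K * indicator A x + K powr (1 - \<alpha>) * enn2real (?r x) powr \<alpha>"
          by (rule pointwise_bound) (use Kpos a in \<open>auto simp: indicator_def\<close>)
        then have "ennreal (enn2real (?r x) * indicator A x) \<le> ennreal (K * indicator A x + K powr (1 - \<alpha>) * enn2real (?r x) powr \<alpha>)"
          by (rule ennreal_leI)
        also have "\<dots> = ennreal K * indicator A x + ennreal (K powr (1 - \<alpha>)) * ennreal (enn2real (?r x) powr \<alpha>)"
          using Kpos by (simp add: ennreal_plus ennreal_mult' indicator_def)
        finally show "ennreal (enn2real (?r x) * indicator A x) \<le> ennreal K * indicator A x + ennreal (K powr (1 - \<alpha>)) * ennreal (enn2real (?r x) powr \<alpha>)" .
      qed
      also have "\<dots> = ennreal K * emeasure Q A + ennreal (K powr (1 - \<alpha>)) * I"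
        unfolding I_def using AQ
        by (subst nn_integral_add) (auto simp: nn_integral_cmult)
      also have "\<dots> = ennreal (K * measure Q A + K powr (1 - \<alpha>) * Ir)"
        using Kpos Ir0 by (simp add: II Q.emeasure_eq_measure ennreal_plus ennreal_mult')
      also have "\<dots> \<le> ennreal (exp \<epsilon> * measure Q A + \<delta>)"
        using Kd KE by (intro ennreal_leI add_mono mult_right_mono) auto
      finally have "emeasure P A \<le> ennreal (exp \<epsilon> * measure Q A + \<delta>)" .
      then have "ennreal (measure P A) \<le> ennreal (exp \<epsilon> * measure Q A + \<delta>)"
        by (simp only: P.emeasure_eq_measure)
      moreover have nn: "0 \<le> exp \<epsilon> * measure Q A + \<delta>" using d by simp
      ultimately show ?thesis using ennreal_le_iff[OF nn] by blast
    qed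
    have amd: "approx_max_div \<delta> P Q \<le> ereal \<epsilon>"
      unfolding approx_max_div_def using eps0 bnd by (intro Inf_lower) blast
    then have "e2ennreal (approx_max_div \<delta> P Q) \<le> ennreal \<epsilon>"
      using e2ennreal_mono[OF amd] by simp
    also have "ennreal \<epsilon> = ennreal (max 0 D) + ennreal c"
      unfolding \<epsilon>_def by (rule ennreal_plus) (use c0 in auto)
    also have "ennreal (max 0 D) = e2ennreal (renyi_div \<alpha> P Q)"
      unfolding ren e2ennreal_ereal by (cases "D \<ge> 0") (auto simp: max_def ennreal_neg)
    finally show ?thesis unfolding c_def .
  qed
qed

lemma cond_out_prob:
  fixes \<theta> :: "('s \<times> 'x) measure" and M :: "'x \<Rightarrow> 'a::euclidean_space measure"
  assumes "prob_space \<theta>" "{p \<in> space \<theta>. fst p = s} \<in> sets \<theta>" "secret_marg \<theta> s > 0"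
    and K: "(\<lambda>p. M (snd p)) \<in> \<theta> \<rightarrow>\<^sub>M prob_algebra borel"
  shows "prob_space (cond_out \<theta> M s) \<and> sets (cond_out \<theta> M s) = sets borel"
proof -
  let ?S = "{p \<in> space \<theta>. fst p = s}"
  interpret prob_space \<theta> by fact
  have "emeasure \<theta> ?S \<noteq> 0" "emeasure \<theta> ?S \<noteq> \<infinity>"
    using assms(3) unfolding secret_marg_def by (auto simp: emeasure_eq_measure)
  then have "prob_space (uniform_measure \<theta> ?S)" by (rule prob_space_uniform_measure)
  then have A: "uniform_measure \<theta> ?S \<in> space (prob_algebra \<theta>)"
    by (simp add: space_prob_algebra)
  show ?thesis unfolding cond_out_def
    using prob_space_bind'[OF A K] sets_bind'[OF A K] by simp
qed

lemma slice_prob: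
  fixes N :: "'a::euclidean_space measure"
  assumes "prob_space N" "sets N = sets borel"
  shows "prob_space (slice_push u N) \<and> sets (slice_push u N) = sets borel"
proof -
  have m: "(\<lambda>a. a \<bullet> u) \<in> N \<rightarrow>\<^sub>M borel"
    using assms(2) by (simp cong: measurable_cong_sets)
  show ?thesis unfolding slice_push_def
    using prob_space.prob_space_distr[OF assms(1) m] by simp
qed

theorem theorem8:
  fixes \<alpha> \<epsilon> \<delta> :: real
    and Q :: "('s \<times> 's) set"
    and \<Theta> :: "('s \<times> 'x) measure set"
    and U :: "'a::euclidean_space set"
    and \<omega> :: "'a measure"
    and M :: "'x \<Rightarrow> 'a measure"
  assumes "\<alpha> > 1"
    and priors: "\<And>\<theta> s. \<theta> \<in> \<Theta> \<Longrightarrow> prob_space \<theta> \<and> {p \<in> space \<theta>. fst p = s} \<in> sets \<theta>"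
    and kernel: "\<And>\<theta>. \<theta> \<in> \<Theta> \<Longrightarrow> (\<lambda>p. M (snd p)) \<in> \<theta> \<rightarrow>\<^sub>M prob_algebra borel"
    and "U \<subseteq> sphere 0 1"
    and "prob_space \<omega>" and "sets \<omega> = sets borel" and "AE u in \<omega>. u \<in> U"
    and "ave_SRPP \<alpha> \<epsilon> \<omega> Q \<Theta> M"
    and "0 < \<delta>" and "\<delta> < 1"
  shows "ave_SPP (\<epsilon> + ln (1 / \<delta>) / (\<alpha> - 1)) \<delta> \<omega> Q \<Theta> M"
  unfolding ave_SPP_def
proof (intro ballI impI, clarify)
  fix \<theta> si sj
  assume th: "\<theta> \<in> \<Theta>" and q: "(si, sj) \<in> Q"
    and pi: "secret_marg \<theta> si > 0" and pj: "secret_marg \<theta> sj > 0"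
  define c where "c = ln (1 / \<delta>) / (\<alpha> - 1)"
  have c0: "c \<ge> 0" unfolding c_def using assms by (auto intro!: divide_nonneg_pos)
  define f where "f u = e2ennreal (renyi_div \<alpha> (slice_push u (cond_out \<theta> M si))
                                             (slice_push u (cond_out \<theta> M sj)))" for u
  define g where "g u = e2ennreal (approx_max_div \<delta> (slice_push u (cond_out \<theta> M si))
                                             (slice_push u (cond_out \<theta> M sj)))" for u
  have srpp: "enn2ereal (\<integral>\<^sup>+ u. f u \<partial>\<omega>) \<le> ereal \<epsilon>"
    using assms(8) th q pi pj unfolding ave_SRPP_def f_def by auto
  have ci: "prob_space (cond_out \<theta> M si) \<and> sets (cond_out \<theta> M si) = sets borel"
    using cond_out_prob[OF _ _ pi kernel[OF th]] priors[OF th] by blast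
  have cj: "prob_space (cond_out \<theta> M sj) \<and> sets (cond_out \<theta> M sj) = sets borel"
    using cond_out_prob[OF _ _ pj kernel[OF th]] priors[OF th] by blast
  have pw: "g u \<le> f u + ennreal c" for u
  proof -
    have a: "prob_space (slice_push u (cond_out \<theta> M si)) \<and> sets (slice_push u (cond_out \<theta> M si)) = sets borel"
      using slice_prob ci by blast
    have b: "prob_space (slice_push u (cond_out \<theta> M sj)) \<and> sets (slice_push u (cond_out \<theta> M sj)) = sets borel"
      using slice_prob cj by blast
    show ?thesis unfolding f_def g_def c_def
      using a b assms by (intro key) auto
  qed
  have "(\<integral>\<^sup>+ u. g u \<partial>\<omega>) \<le> (\<integral>\<^sup>+ u. f u + ennreal c \<partial>\<omega>)"
    by (intro nn_integral_mono pw)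
  also have "\<dots> \<le> (\<integral>\<^sup>+ u. f u \<partial>\<omega>) + ennreal c"
    by (rule nn_integral_add_const_le) fact
  finally have "enn2ereal (\<integral>\<^sup>+ u. g u \<partial>\<omega>) \<le> enn2ereal ((\<integral>\<^sup>+ u. f u \<partial>\<omega>) + ennreal c)"
    by (simp add: less_eq_ennreal.rep_eq)
  also have "\<dots> = enn2ereal (\<integral>\<^sup>+ u. f u \<partial>\<omega>) + ereal c"
    using c0 by (simp add: plus_ennreal.rep_eq)
  also have "\<dots> \<le> ereal \<epsilon> + ereal c"
    using srpp by (rule add_right_mono)
  finally show "enn2ereal (\<integral>\<^sup>+ u. g u \<partial>\<omega>) \<le> ereal (\<epsilon> + c)" by simp
qed

end
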